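(* Let $Q$ be an equivariantly supported quantal frame with base locale $Q_0$ and support $\varsigma$. Then for all $x\in R(Q)$ and $y\in Q$ we have $\varsigma(x\wedge y)=\varsigma(x)\wedge\varsigma(y)$.
   Context: For a locale $A$, an $A$-$A$-bimodule is a sup-lattice $M$ with actions $a\triangleright m$, $m\triangleleft a$ preserving joins in each variable, with $1_A\triangleright m=m$, $(a\wedge b)\triangleright m=a\triangleright(b\triangleright m)$, $m\triangleleft1_A=m$, $m\triangleleft(a\wedge b)=(m\triangleleft a)\triangleleft b$, $(a\triangleright m)\triangleleft b=a\triangleright(m\triangleleft b)$. An $A$-$A$-quantale is such a $Q$ with associative join-preserving multiplication and $(a\triangleright x)y=a\triangleright(xy)$, $(x\triangleleft a)y=x(a\triangleright y)$, $(xy)\triangleleft a=x(y\triangleleft a)$; involutive if there is a join-preserving $x\mapsto x^*$ with $x^{**}=x$, $(xy)^*=y^*x^*$, $(a\triangleright(x\triangleleft b))^*=b\triangleright(x^*\triangleleft a)$. $1_Q$ is the top. A support is a join-preserving $\varsigma:Q\to Q_0$ with $\varsigma(1_Q)=1_{Q_0}$, $\varsigma(x)\triangleright y\le xx^*y$, $\varsigma(x)\triangleright x=x$; equivariant if $\varsigma(a\triangleright x)=a\wedge\varsigma(x)$. An equivariantly supported quantal frame is an involutive $Q_0$-$Q_0$-quantale with an equivariant support whose lattice is a frame and such that $(a\triangleright x)\wedge y=a\triangleright(x\wedge y)$ and $(x\triangleleft a)\wedge y=(x\wedge y)\triangleleft a$ for all $a\in Q_0$, $x,y\in Q$. $R(Q)=\{x\in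 Q\mid x1_Q\le x\}$. *)

theory Defs
  imports Main
begin

unbundle lattice_syntax

definition sup_pres :: "('a::complete_lattice \<Rightarrow> 'b::complete_lattice) \<Rightarrow> bool" where
  "sup_pres f \<longleftrightarrow> (\<forall>S. f (Sup S) = Sup (f ` S))"

definition is_frame :: "'a::complete_lattice itself \<Rightarrow> bool" where
  "is_frame _ \<longleftrightarrow> (\<forall>(x::'a) S. x \<sqinter> Sup S = Sup ((inf x) ` S))"

definition bimodule ::
  "('a::complete_lattice \<Rightarrow> 'b::complete_lattice \<Rightarrow> 'b) \<Rightarrow> ('b \<Rightarrow> 'a \<Rightarrow> 'b) \<Rightarrow> bool" where
  "bimodule lact ract \<longleftrightarrow>
     (\<forall>a. sup_pres (lact a)) \<and> (\<forall>m. sup_pres (\<lambda>a. lact a m)) \<and>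
     (\<forall>a. sup_pres (\<lambda>m. ract m a)) \<and> (\<forall>m. sup_pres (ract m)) \<and>
     (\<forall>m. lact top m = m) \<and> (\<forall>a b m. lact (a \<sqinter> b) m = lact a (lact b m)) \<and>
     (\<forall>m. ract m top = m) \<and> (\<forall>a b m. ract m (a \<sqinter> b) = ract (ract m a) b) \<and>
     (\<forall>a b m. ract (lact a m) b = lact a (ract m b))"

definition quantale ::
  "('a::complete_lattice \<Rightarrow> 'b::complete_lattice \<Rightarrow> 'b) \<Rightarrow> ('b \<Rightarrow> 'a \<Rightarrow> 'b) \<Rightarrow> ('b \<Rightarrow> 'b \<Rightarrow> 'b) \<Rightarrow> bool" where
  "quantale lact ract mult \<longleftrightarrow> bimodule lact ract \<and>
     (\<forall>x y z. mult (mult x y) z = mult x (mult y z)) \<and>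
     (\<forall>x. sup_pres (mult x)) \<and> (\<forall>y. sup_pres (\<lambda>x. mult x y)) \<and>
     (\<forall>a x y. mult (lact a x) y = lact a (mult x y)) \<and>
     (\<forall>a x y. mult (ract x a) y = mult x (lact a y)) \<and>
     (\<forall>a x y. ract (mult x y) a = mult x (ract y a))"

definition involutive_quantale ::
  "('a::complete_lattice \<Rightarrow> 'b::complete_lattice \<Rightarrow> 'b) \<Rightarrow> ('b \<Rightarrow> 'a \<Rightarrow> 'b) \<Rightarrow> ('b \<Rightarrow> 'b \<Rightarrow> 'b)
    \<Rightarrow> ('b \<Rightarrow> 'b) \<Rightarrow> bool" where
  "involutive_quantale lact ract mult invo \<longleftrightarrow> quantale lact ract mult \<and>
     sup_pres invo \<and> (\<forall>x. invo (invo x) = x) \<and>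
     (\<forall>x y. invo (mult x y) = mult (invo y) (invo x)) \<and>
     (\<forall>a b x. invo (lact a (ract x b)) = lact b (ract (invo x) a))"

text \<open>Support; x x* y is read as (x x*) y (multiplication is associative).\<close>
definition support ::
  "('a::complete_lattice \<Rightarrow> 'b::complete_lattice \<Rightarrow> 'b) \<Rightarrow> ('b \<Rightarrow> 'b \<Rightarrow> 'b)
    \<Rightarrow> ('b \<Rightarrow> 'b) \<Rightarrow> ('b \<Rightarrow> 'a) \<Rightarrow> bool" where
  "support lact mult invo supp \<longleftrightarrow> sup_pres supp \<and> supp top = top \<and>
     (\<forall>x y. lact (supp x) y \<le> mult (mult x (invo x)) y) \<and>
     (\<forall>x. lact (supp x) x = x)"

definition equivariant_support ::
  "('a::complete_lattice \<Rightarrow> 'b::complete_lattice \<Rightarrow> 'b) \<Rightarrow> ('b \<Rightarrow> 'b \<Rightarrow> 'b)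
    \<Rightarrow> ('b \<Rightarrow> 'b) \<Rightarrow> ('b \<Rightarrow> 'a) \<Rightarrow> bool" where
  "equivariant_support lact mult invo supp \<longleftrightarrow> support lact mult invo supp \<and>
     (\<forall>a x. supp (lact a x) = a \<sqinter> supp x)"

text \<open>Equivariantly supported quantal frame Q (type 'b) over base locale Q0 (type 'a).\<close>
definition eq_supp_quantal_frame ::
  "('a::complete_lattice \<Rightarrow> 'b::complete_lattice \<Rightarrow> 'b) \<Rightarrow> ('b \<Rightarrow> 'a \<Rightarrow> 'b) \<Rightarrow> ('b \<Rightarrow> 'b \<Rightarrow> 'b)
    \<Rightarrow> ('b \<Rightarrow> 'b) \<Rightarrow> ('b \<Rightarrow> 'a) \<Rightarrow> bool" where
  "eq_supp_quantal_frame lact ract mult invo supp \<longleftrightarrow>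
     is_frame TYPE('a) \<and> is_frame TYPE('b) \<and>
     involutive_quantale lact ract mult invo \<and>
     equivariant_support lact mult invo supp \<and>
     (\<forall>a x y. lact a x \<sqinter> y = lact a (x \<sqinter> y)) \<and>
     (\<forall>a x y. ract x a \<sqinter> y = ract (x \<sqinter> y) a)"

definition RQ :: "('b::complete_lattice \<Rightarrow> 'b \<Rightarrow> 'b) \<Rightarrow> 'b set" where
  "RQ mult = {x. mult x top \<le> x}"

end

theory Submission
  imports Defs
begin

lemma sup_pres_mono:
  assumes "sup_pres f" and "a \<le> b"
  shows "f a \<le> f b"
proof -
  have "b = Sup {a, b}" using assms(2) by (simp add: sup_absorb2)
  hence "f b = Sup (f ` {a, b})" using assms(1) unfolding sup_pres_def by metis
  thus ?thesis by (simp add: sup.absorb_iff2)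
qed

theorem lemma4p3:
  fixes lact :: "'a::complete_lattice \<Rightarrow> 'b::complete_lattice \<Rightarrow> 'b"
    and ract :: "'b \<Rightarrow> 'a \<Rightarrow> 'b" and mult :: "'b \<Rightarrow> 'b \<Rightarrow> 'b"
    and invo :: "'b \<Rightarrow> 'b" and supp :: "'b \<Rightarrow> 'a"
  assumes "eq_supp_quantal_frame lact ract mult invo supp"
    and "x \<in> RQ mult"
  shows "supp (inf x y) = inf (supp x) (supp y)"
proof (rule antisym)
  have Q: "involutive_quantale lact ract mult invo" and E: "equivariant_support lact mult invo supp"
    using assms(1) unfolding eq_supp_quantal_frame_def by auto
  have qu: "quantale lact ract mult" using Q unfolding involutive_quantale_def by auto
  have bm: "bimodule lact ract" using qu unfolding quantale_def by auto
  have sp: "support lact mult invo supp" using E unfolding equivariant_support_def by auto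
  have spp: "sup_pres supp" using sp unfolding support_def by auto
  show "supp (inf x y) \<le> inf (supp x) (supp y)"
    using sup_pres_mono[OF spp] by simp
  define a where "a = inf (supp x) (supp y)"
  have ly: "lact (supp y) y = y" using sp unfolding support_def by auto
  have "lact a y = lact (supp x) (lact (supp y) y)"
    using bm unfolding bimodule_def a_def by auto
  hence 1: "lact a y = lact (supp x) y" using ly by simp
  have "lact (supp x) y \<le> mult (mult x (invo x)) y" using sp unfolding support_def by auto
  also have "\<dots> = mult x (mult (invo x) y)" using qu unfolding quantale_def by auto
  also have "\<dots> \<le> mult x top"
    using qu unfolding quantale_def by (meson sup_pres_mono top_greatest)
  also have "\<dots> \<le> x" using assms(2) unfolding RQ_def by auto
  finally have 2: "lact a y \<le> x" using 1 by simp
  have m: "sup_pres (\<lambda>b. lact b y)" using bm unfolding bimodule_def by auto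
  have "lact a y \<le> lact top y" using sup_pres_mono[OF m, of a top] by simp
  hence 3: "lact a y \<le> y" using bm unfolding bimodule_def by auto
  have "supp (lact a y) = inf a (supp y)" using E unfolding equivariant_support_def by auto
  hence 4: "supp (lact a y) = a" unfolding a_def by (simp add: inf.absorb1)
  have "supp (lact a y) \<le> supp (inf x y)"
    using sup_pres_mono[OF spp] 2 3 by simp
  thus "inf (supp x) (supp y) \<le> supp (inf x y)" using 4 a_def by simp
qed

end
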